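(* Let $f:\mathbb{R}^d\to\mathbb{R}$ be convex and $L$-smooth ($L>0$), and suppose $f$ has at least one minimizer; let $\mathbf{x}^\star$ be any minimizer of $f$. Let $(\sigma_n)_{n\ge 1}$ be a sequence of positive real numbers, let $\mathbf{x}_0\in\mathbb{R}^d$, let $0<t\le \frac1L$, and define the GSmoothGD iterates $$\mathbf{x}_{k+1}=\mathbf{x}_k-t\,\nabla f_{\sigma_{k+1}}(\mathbf{x}_k),\qquad k\ge 0.$$ Then for every $k\ge 1$, $$f(\mathbf{x}_k)-f(\mathbf{x}^\star)\le \frac{\|\mathbf{x}_0-\mathbf{x}^\star\|^2}{2tk}+\frac{Ld}{4k}\left(\sum_{i=1}^{k}\sigma_i^2+\sum_{i=2}^{k} i\,\max\big(0,\sigma_i^2-\sigma_{i-1}^2\big)\right).$$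
   Context: For a measurable $f:\mathbb{R}^d\to\mathbb{R}$ and $\sigma>0$, the Gaussian smoothing of $f$ with radius $\sigma$ is $f_\sigma(\mathbf{x})=\pi^{-d/2}\int_{\mathbb{R}^d} f(\mathbf{x}+\sigma\mathbf{u})\,e^{-\|\mathbf{u}\|_2^2}\,d\mathbf{u}$ (equivalently $\mathbb{E}_{\mathbf{u}\sim\mathcal N(0,I_d)}[f(\mathbf{x}+\sigma\sqrt2\,\mathbf{u})]$), and $f_0=f$. A function is $L$-smooth if it is differentiable and its gradient is $L$-Lipschitz in the Euclidean norm. *)

theory Defs
  imports "HOL-Analysis.Analysis"
begin

definition gauss_smooth :: "('a::euclidean_space \<Rightarrow> real) \<Rightarrow> real \<Rightarrow> 'a \<Rightarrow> real" where
  "gauss_smooth f \<sigma> x =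
     (if \<sigma> = 0 then f x
      else pi powr (- real DIM('a) / 2) *
           (\<integral>u. f (x + \<sigma> *\<^sub>R u) * exp (- (norm u)\<^sup>2) \<partial>lborel))"

definition grad :: "('a::euclidean_space \<Rightarrow> real) \<Rightarrow> 'a \<Rightarrow> 'a" where
  "grad F x = (SOME g. (F has_derivative (\<lambda>h. g \<bullet> h)) (at x))"

definition L_smooth :: "real \<Rightarrow> ('a::euclidean_space \<Rightarrow> real) \<Rightarrow> bool" where
  "L_smooth L f \<longleftrightarrow> (\<forall>x. f differentiable (at x)) \<and>
     (\<forall>x y. norm (grad f x - grad f y) \<le> L * norm (x - y))"

end

theory Submission
  imports Defs "HOL-Probability.Probability"
begin
lemma linear_repr:
  fixes l :: "'a::euclidean_space \<Rightarrow> real"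
  assumes "linear l"
  shows "l = (\<lambda>h. (\<Sum>b\<in>Basis. l b *\<^sub>R b) \<bullet> h)"
proof
  fix h :: 'a
  have "l h = l (\<Sum>b\<in>Basis. (h \<bullet> b) *\<^sub>R b)" by (simp add: euclidean_representation)
  also have "\<dots> = (\<Sum>b\<in>Basis. (h \<bullet> b) * l b)"
    using assms by (simp add: linear_sum linear_scale)
  also have "\<dots> = (\<Sum>b\<in>Basis. l b *\<^sub>R b) \<bullet> h"
    by (simp add: inner_sum_left inner_sum_right inner_commute mult.commute)
  finally show "l h = (\<Sum>b\<in>Basis. l b *\<^sub>R b) \<bullet> h" .
qed

lemma grad_works:
  fixes F :: "'a::euclidean_space \<Rightarrow> real"
  assumes "F differentiable (at x)"
  shows "(F has_derivative (\<lambda>h. grad F x \<bullet> h)) (at x)"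
proof -
  obtain l where l: "(F has_derivative l) (at x)" using assms differentiable_def by blast
  then have "linear l" using has_derivative_linear by blast
  then have "(F has_derivative (\<lambda>h. (\<Sum>b\<in>Basis. l b *\<^sub>R b) \<bullet> h)) (at x)"
    using l linear_repr by metis
  then show ?thesis unfolding grad_def by (rule someI)
qed

lemma grad_eqI:
  fixes F :: "'a::euclidean_space \<Rightarrow> real"
  assumes "(F has_derivative (\<lambda>h. v \<bullet> h)) (at x)"
  shows "grad F x = v"
proof -
  have d: "(F has_derivative (\<lambda>h. grad F x \<bullet> h)) (at x)"
    using assms grad_works differentiableI by blast
  have "(\<lambda>h. grad F x \<bullet> h) = (\<lambda>h. v \<bullet> h)"
    using has_derivative_unique[OF d assms] .
  then have "grad F x \<bullet> (grad F x - v) = v \<bullet> (grad F x - v)" by metis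
  then have "(grad F x - v) \<bullet> (grad F x - v) = 0" by (simp add: inner_diff_left)
  then show ?thesis by simp
qed

lemma line_deriv:
  fixes f :: "'a::euclidean_space \<Rightarrow> real"
  assumes der: "\<And>x. (f has_derivative (\<lambda>h. D x \<bullet> h)) (at x)"
  shows "((\<lambda>s. f (x + s *\<^sub>R h)) has_real_derivative (D (x + s *\<^sub>R h) \<bullet> h)) (at s within S)"
proof -
  have 1: "((\<lambda>t. x + t *\<^sub>R h) has_derivative (\<lambda>t. t *\<^sub>R h)) (at s within S)"
    by (intro derivative_eq_intros) auto
  have 2: "(f has_derivative (\<lambda>v. D (x + s *\<^sub>R h) \<bullet> v)) (at (x + s *\<^sub>R h))"
    using der by blast
  have "((\<lambda>t. f (x + t *\<^sub>R h)) has_derivative (\<lambda>t. D (x + s *\<^sub>R h) \<bullet> (t *\<^sub>R h))) (at s within S)"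
    using has_derivative_compose[OF 1 2] by (simp add: o_def)
  moreover have "(\<lambda>t. D (x + s *\<^sub>R h) \<bullet> (t *\<^sub>R h)) = (\<lambda>t. (D (x + s *\<^sub>R h) \<bullet> h) * t)"
    by (rule ext) simp
  ultimately show ?thesis unfolding has_field_derivative_def by simp
qed

lemma above_tangent:
  fixes f :: "'a::euclidean_space \<Rightarrow> real"
  assumes conv: "convex_on UNIV f"
    and der: "\<And>x. (f has_derivative (\<lambda>h. D x \<bullet> h)) (at x)"
  shows "f x + D x \<bullet> (y - x) \<le> f y"
proof -
  define h where "h = y - x"
  define \<phi> where "\<phi> s = f (x + s *\<^sub>R h)" for s
  have "(\<phi> has_real_derivative (D x \<bullet> h)) (at 0 within {0<..})"
    using line_deriv[OF der, of x h 0] unfolding \<phi>_def by simp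
  then have lim: "((\<lambda>s. (\<phi> s - \<phi> 0) / (s - 0)) \<longlongrightarrow> D x \<bullet> h) (at_right 0)"
    using has_field_derivative_iff by blast
  have ev: "eventually (\<lambda>s. (\<phi> s - \<phi> 0) / (s - 0) \<le> f y - f x) (at_right 0)"
  proof -
    have "eventually (\<lambda>s::real. s \<in> {0<..<1}) (at_right 0)"
      by (rule eventually_at_right_real) simp
    then show ?thesis
    proof eventually_elim
      case (elim s)
      then have elim: "0 < s" "s < 1" by auto
      have "x + s *\<^sub>R h = (1 - s) *\<^sub>R x + s *\<^sub>R y"
        by (simp add: h_def algebra_simps)
      then have "\<phi> s \<le> (1 - s) * f x + s * f y"
        using convex_onD[OF conv, of s x y] elim unfolding \<phi>_def by simp
      then have "\<phi> s - \<phi> 0 \<le> s * (f y - f x)" by (simp add: \<phi>_def algebra_simps)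
      then show ?case using elim by (simp add: divide_le_eq mult.commute)
    qed
  qed
  have "D x \<bullet> h \<le> f y - f x"
    using tendsto_upperbound[OF lim ev] by simp
  then show ?thesis by (simp add: h_def)
qed

lemma descent:
  fixes f :: "'a::euclidean_space \<Rightarrow> real"
  assumes der: "\<And>x. (f has_derivative (\<lambda>h. D x \<bullet> h)) (at x)"
    and lip: "\<And>x y. norm (D x - D y) \<le> L * norm (x - y)"
  shows "f y \<le> f x + D x \<bullet> (y - x) + L / 2 * (norm (y - x))\<^sup>2"
proof -
  define h where "h = y - x"
  define \<psi> where "\<psi> s = f (x + s *\<^sub>R h) - s * (D x \<bullet> h) - L / 2 * s\<^sup>2 * (norm h)\<^sup>2" for s
  have "\<psi> 0 \<ge> \<psi> 1"
  proof (rule DERIV_nonpos_imp_nonincreasing[of 0 1])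
    fix s :: real assume s: "0 \<le> s" "s \<le> 1"
    have d: "(\<psi> has_real_derivative (D (x + s *\<^sub>R h) \<bullet> h - D x \<bullet> h - L / 2 * (2 * s) * (norm h)\<^sup>2)) (at s)"
    proof -
      have d1: "((\<lambda>s. f (x + s *\<^sub>R h)) has_real_derivative (D (x + s *\<^sub>R h) \<bullet> h)) (at s)"
        by (rule line_deriv[OF der])
      have d2: "((\<lambda>s. s * (D x \<bullet> h)) has_real_derivative (D x \<bullet> h)) (at s)"
        by (intro derivative_eq_intros) auto
      have d3: "((\<lambda>s. L / 2 * s\<^sup>2 * (norm h)\<^sup>2) has_real_derivative (L / 2 * (2 * s) * (norm h)\<^sup>2)) (at s)"
        by (intro derivative_eq_intros) auto
      show ?thesis using DERIV_diff[OF DERIV_diff[OF d1 d2] d3] by (simp add: \<psi>_def[abs_def])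
    qed
    have "D (x + s *\<^sub>R h) \<bullet> h - D x \<bullet> h = (D (x + s *\<^sub>R h) - D x) \<bullet> h"
      by (simp add: inner_diff_left)
    also have "\<dots> \<le> norm (D (x + s *\<^sub>R h) - D x) * norm h"
      by (rule norm_cauchy_schwarz)
    also have "\<dots> \<le> (L * norm (s *\<^sub>R h)) * norm h"
      using lip[of "x + s *\<^sub>R h" x] by (intro mult_right_mono) auto
    also have "\<dots> = L / 2 * (2 * s) * (norm h)\<^sup>2"
      using s by (simp add: power2_eq_square)
    finally show "\<exists>y. (\<psi> has_real_derivative y) (at s) \<and> y \<le> 0"
      using d by (intro exI[of _ "D (x + s *\<^sub>R h) \<bullet> h - D x \<bullet> h - L / 2 * (2 * s) * (norm h)\<^sup>2"]) auto
  qed simp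
  then show ?thesis by (simp add: \<psi>_def h_def)
qed

lemma grad_mono:
  fixes f :: "'a::euclidean_space \<Rightarrow> real"
  assumes conv: "convex_on UNIV f"
    and der: "\<And>x. (f has_derivative (\<lambda>h. D x \<bullet> h)) (at x)"
  shows "0 \<le> (D x - D y) \<bullet> (x - y)"
  using above_tangent[OF conv der, of x y] above_tangent[OF conv der, of y x]
  by (simp add: inner_diff_left inner_diff_right inner_commute)

lemma gauss1_0: "has_bochner_integral lborel (\<lambda>x::real. exp (- x\<^sup>2)) (sqrt pi)"
proof -
  have "has_bochner_integral lborel (\<lambda>x. exp (-x\<^sup>2)*x^(2 * 0)) (sqrt pi * (fact (2 * 0) / (2 ^ (2 * 0) * fact 0)))"
    using has_bochner_integral_even_function[OF gaussian_moment_even_pos[where k=0]] by simp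
  then show ?thesis by simp
qed

lemma gauss1_2: "has_bochner_integral lborel (\<lambda>x::real. exp (- x\<^sup>2) * x\<^sup>2) (sqrt pi / 2)"
proof -
  have "has_bochner_integral lborel (\<lambda>x. exp (-x\<^sup>2)*x^(2 * 1)) (sqrt pi * (fact (2 * 1) / (2 ^ (2 * 1) * fact 1)))"
    using has_bochner_integral_even_function[OF gaussian_moment_even_pos[where k=1]] by simp
  then show ?thesis by simp
qed

lemma gauss1_w: "(\<integral>\<^sup>+y. ennreal (exp (- y\<^sup>2) * (if c then y\<^sup>2 else 1)) \<partial>lborel)
   = ennreal (sqrt pi * (if c then 1/2 else 1))"
proof (cases c)
  case True
  then show ?thesis using gauss1_2
    by (simp add: nn_integral_eq_integral has_bochner_integral_iff)
next
  case False
  then show ?thesis using gauss1_0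
    by (simp add: nn_integral_eq_integral has_bochner_integral_iff)
qed

lemma norm2_sum: "(norm (u::'a::euclidean_space))\<^sup>2 = (\<Sum>b\<in>Basis. (u \<bullet> b)\<^sup>2)"
  unfolding power2_norm_eq_inner by (subst euclidean_inner) (simp add: power2_eq_square)

lemma exp_norm_prod: "exp (- (norm (u::'a::euclidean_space))\<^sup>2) = (\<Prod>b\<in>Basis. exp (- (u \<bullet> b)\<^sup>2))"
  by (simp add: norm2_sum exp_sum sum_negf[symmetric])

lemma gaussd_nn_w:
  fixes b :: "'a::euclidean_space"
  shows "(\<integral>\<^sup>+u. ennreal (exp (- (norm (u::'a))\<^sup>2) * (if b \<in> Basis then (u \<bullet> b)\<^sup>2 else 1)) \<partial>lborel)
     = ennreal (sqrt pi ^ DIM('a) * (if b \<in> Basis then 1/2 else 1))"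
proof -
  have "(\<integral>\<^sup>+u. ennreal (exp (- (norm (u::'a))\<^sup>2) * (if b \<in> Basis then (u \<bullet> b)\<^sup>2 else 1)) \<partial>lborel)
    = (\<integral>\<^sup>+u. (\<Prod>b'\<in>Basis. (\<lambda>b' y. ennreal (exp (- y\<^sup>2) * (if b' = b then y\<^sup>2 else 1))) b' (u \<bullet> b')) \<partial>lborel)"
  proof (rule nn_integral_cong)
    fix u :: 'a
    have "(\<Prod>b'\<in>Basis. ennreal (exp (- (u \<bullet> b')\<^sup>2) * (if b' = b then (u \<bullet> b')\<^sup>2 else 1)))
      = ennreal (\<Prod>b'\<in>Basis. exp (- (u \<bullet> b')\<^sup>2) * (if b' = b then (u \<bullet> b')\<^sup>2 else 1))"
      by (rule prod_ennreal) auto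
    also have "(\<Prod>b'\<in>Basis. exp (- (u \<bullet> b')\<^sup>2) * (if b' = b then (u \<bullet> b')\<^sup>2 else 1))
       = exp (- (norm u)\<^sup>2) * (if b \<in> Basis then (u \<bullet> b)\<^sup>2 else 1)"
      by (simp add: prod.distrib exp_norm_prod prod.delta)
    finally show "ennreal (exp (- (norm u)\<^sup>2) * (if b \<in> Basis then (u \<bullet> b)\<^sup>2 else 1)) =
      (\<Prod>b'\<in>Basis. (\<lambda>b' y. ennreal (exp (- y\<^sup>2) * (if b' = b then y\<^sup>2 else 1))) b' (u \<bullet> b'))"
      by simp
  qed
  also have "\<dots> = (\<Prod>b'\<in>Basis. (\<integral>\<^sup>+y. ennreal (exp (- y\<^sup>2) * (if b' = b then y\<^sup>2 else 1)) \<partial>lborel))"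
    by (rule nn_integral_lborel_prod) auto
  also have "\<dots> = (\<Prod>b'\<in>Basis. ennreal (sqrt pi * (if b' = b then 1/2 else 1)))"
    by (simp add: gauss1_w)
  also have "\<dots> = ennreal (\<Prod>b'\<in>Basis. sqrt pi * (if b' = b then 1/2 else 1))"
    by (rule prod_ennreal) auto
  also have "(\<Prod>b'\<in>Basis. sqrt pi * (if b' = b then 1/2 else 1)) = sqrt pi ^ DIM('a) * (if b \<in> Basis then 1/2 else 1)"
    by (simp add: prod.distrib prod.delta)
  finally show ?thesis .
qed

lemma gauss_nn0: "(\<integral>\<^sup>+u. ennreal (exp (- (norm (u::'a::euclidean_space))\<^sup>2)) \<partial>lborel) = ennreal (sqrt pi ^ DIM('a))"
  using gaussd_nn_w[of "0::'a"] by simp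

lemma gauss_nn2: "(\<integral>\<^sup>+u. ennreal ((norm (u::'a::euclidean_space))\<^sup>2 * exp (- (norm u)\<^sup>2)) \<partial>lborel)
   = ennreal (real DIM('a) / 2 * sqrt pi ^ DIM('a))"
proof -
  have "(\<integral>\<^sup>+u. ennreal ((norm (u::'a))\<^sup>2 * exp (- (norm u)\<^sup>2)) \<partial>lborel)
     = (\<integral>\<^sup>+u. (\<Sum>b\<in>Basis. ennreal (exp (- (norm (u::'a))\<^sup>2) * (if b \<in> Basis then (u \<bullet> b)\<^sup>2 else 1))) \<partial>lborel)"
  proof (rule nn_integral_cong)
    fix u :: 'a
    have "(\<Sum>b\<in>Basis. ennreal (exp (- (norm (u::'a))\<^sup>2) * (if b \<in> Basis then (u \<bullet> b)\<^sup>2 else 1)))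
      = (\<Sum>b\<in>Basis. ennreal (exp (- (norm (u::'a))\<^sup>2) * (u \<bullet> b)\<^sup>2))"
      by (rule sum.cong) auto
    also have "\<dots> = ennreal (\<Sum>b\<in>Basis. exp (- (norm (u::'a))\<^sup>2) * (u \<bullet> b)\<^sup>2)"
      by (rule sum_ennreal) auto
    also have "(\<Sum>b\<in>Basis. exp (- (norm (u::'a))\<^sup>2) * (u \<bullet> b)\<^sup>2) = (norm u)\<^sup>2 * exp (- (norm u)\<^sup>2)"
    proof -
      have "(\<Sum>b\<in>Basis. exp (- (norm (u::'a))\<^sup>2) * (u \<bullet> b)\<^sup>2) = exp (- (norm u)\<^sup>2) * (\<Sum>b\<in>Basis. (u \<bullet> b)\<^sup>2)"
        by (rule sum_distrib_left[symmetric])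
      then show ?thesis by (metis norm2_sum mult.commute)
    qed
    finally show "ennreal ((norm u)\<^sup>2 * exp (- (norm u)\<^sup>2)) = (\<Sum>b\<in>Basis. ennreal (exp (- (norm (u::'a))\<^sup>2) * (if b \<in> Basis then (u \<bullet> b)\<^sup>2 else 1)))"
      by simp
  qed
  also have "\<dots> = (\<Sum>b\<in>Basis. (\<integral>\<^sup>+u. ennreal (exp (- (norm (u::'a))\<^sup>2) * (if b \<in> Basis then (u \<bullet> b)\<^sup>2 else 1)) \<partial>lborel))"
    by (rule nn_integral_sum) auto
  also have "\<dots> = (\<Sum>b\<in>(Basis::'a set). ennreal (sqrt pi ^ DIM('a) * (1/2)))"
  proof (rule sum.cong)
    fix b :: 'a assume "b \<in> Basis"
    then show "(\<integral>\<^sup>+u. ennreal (exp (- (norm (u::'a))\<^sup>2) * (if b \<in> Basis then (u \<bullet> b)\<^sup>2 else 1)) \<partial>lborel)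
      = ennreal (sqrt pi ^ DIM('a) * (1/2))"
      using gaussd_nn_w[of b] by simp
  qed simp
  also have "\<dots> = ennreal (real DIM('a) / 2 * sqrt pi ^ DIM('a))"
    by (subst sum_ennreal) auto
  finally show ?thesis .
qed

definition gd :: "'a::euclidean_space \<Rightarrow> real" where
  "gd u = pi powr (- real DIM('a) / 2) * exp (- (norm u)\<^sup>2)"

definition GN :: "'a::euclidean_space measure" where
  "GN = density lborel (\<lambda>u. ennreal (gd u))"

lemma gd_nonneg: "0 \<le> gd u" by (simp add: gd_def)

lemma gd_meas[measurable]: "gd \<in> borel_measurable borel"
  unfolding gd_def by measurable

lemma sets_GN[measurable_cong, simp]: "sets GN = sets borel"
  by (simp add: GN_def)

lemma space_GN[simp]: "space GN = UNIV"
  by (simp add: GN_def)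

lemma pi_const: "pi powr (- real DIM('a::euclidean_space) / 2) * sqrt pi ^ DIM('a) = 1"
proof -
  have "sqrt pi ^ DIM('a) = (pi powr (1/2)) ^ DIM('a)" by (simp add: powr_half_sqrt)
  also have "\<dots> = (pi powr (1/2)) powr (real DIM('a))" by (simp add: powr_realpow)
  also have "\<dots> = pi powr (real DIM('a) / 2)" by (simp add: powr_powr)
  finally have "sqrt pi ^ DIM('a) = pi powr (real DIM('a) / 2)" .
  then show ?thesis by (simp add: powr_add[symmetric])
qed

lemma GN_nn:
  assumes [measurable]: "g \<in> borel_measurable borel"
  shows "(\<integral>\<^sup>+u. g u \<partial>(GN::'a::euclidean_space measure)) = (\<integral>\<^sup>+u. ennreal (gd u) * g u \<partial>lborel)"
  unfolding GN_def by (rule nn_integral_density) auto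

lemma prob_GN: "prob_space (GN::'a::euclidean_space measure)"
proof
  have "emeasure (GN::'a measure) (space GN) = (\<integral>\<^sup>+u. 1 \<partial>(GN::'a measure))"
    by simp
  also have "\<dots> = (\<integral>\<^sup>+u. ennreal (pi powr (- real DIM('a) / 2)) * ennreal (exp (- (norm (u::'a))\<^sup>2)) \<partial>lborel)"
    by (subst GN_nn) (auto simp: gd_def ennreal_mult intro!: nn_integral_cong)
  also have "\<dots> = ennreal (pi powr (- real DIM('a) / 2)) * ennreal (sqrt pi ^ DIM('a))"
    by (subst nn_integral_cmult) (auto simp: gauss_nn0)
  also have "\<dots> = 1" using pi_const[where 'a='a] by (simp flip: ennreal_mult)
  finally show "emeasure (GN::'a measure) (space GN) = 1" .
qed

lemma GN_sq: "has_bochner_integral (GN::'a::euclidean_space measure) (\<lambda>u. (norm u)\<^sup>2) (real DIM('a) / 2)"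
proof (rule has_bochner_integral_nn_integral)
  have "(\<integral>\<^sup>+u. ennreal ((norm u)\<^sup>2) \<partial>(GN::'a measure))
     = (\<integral>\<^sup>+u. ennreal (pi powr (- real DIM('a) / 2)) * ennreal ((norm (u::'a))\<^sup>2 * exp (- (norm u)\<^sup>2)) \<partial>lborel)"
    by (subst GN_nn) (auto simp: gd_def ennreal_mult' mult_ac intro!: nn_integral_cong)
  also have "\<dots> = ennreal (pi powr (- real DIM('a) / 2)) * ennreal (real DIM('a) / 2 * sqrt pi ^ DIM('a))"
    by (subst nn_integral_cmult) (auto simp: gauss_nn2)
  also have "\<dots> = ennreal (real DIM('a) / 2)" using pi_const[where 'a='a]
    by (simp flip: ennreal_mult add: mult_ac)
  finally show "(\<integral>\<^sup>+u. ennreal ((norm u)\<^sup>2) \<partial>(GN::'a measure)) = ennreal (real DIM('a) / 2)" .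
qed auto

lemma GN_prob: "measure (GN::'a::euclidean_space measure) UNIV = 1"
  using prob_space.prob_space[OF prob_GN] by simp

lemma GN_const[simp]: "integral\<^sup>L (GN::'a::euclidean_space measure) (\<lambda>_. c) = (c::real)"
  using GN_prob[where 'a='a] by (simp add: lebesgue_integral_const)

lemma GN_int_const[simp]: "integrable (GN::'a::euclidean_space measure) (\<lambda>_. c::real)"
  using prob_space.finite_measure[OF prob_GN[where 'a='a]] by (rule finite_measure.integrable_const)

lemma GN_int_sq[simp]: "integrable (GN::'a::euclidean_space measure) (\<lambda>u. (norm u)\<^sup>2)"
  using GN_sq[where 'a='a] by (simp add: has_bochner_integral_iff)

lemma GN_integral_sq: "integral\<^sup>L (GN::'a::euclidean_space measure) (\<lambda>u. (norm u)\<^sup>2) = real DIM('a) / 2"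
  using GN_sq[where 'a='a] by (simp add: has_bochner_integral_iff)

lemma GN_int_norm[simp]: "integrable (GN::'a::euclidean_space measure) norm"
proof (rule Bochner_Integration.integrable_bound[of _ "\<lambda>u. 1 + (norm u)\<^sup>2"])
  show "integrable (GN::'a measure) (\<lambda>u. 1 + (norm u)\<^sup>2)" by simp
  show "AE u in GN. norm (norm u) \<le> norm (1 + (norm (u::'a))\<^sup>2)"
  proof (rule AE_I2)
    fix u :: 'a
    have "0 \<le> (norm u - 1)\<^sup>2" by simp
    then have "norm u \<le> 1 + (norm u)\<^sup>2"
      by (simp add: power2_eq_square algebra_simps) (smt (verit) norm_ge_zero)
    then show "norm (norm u) \<le> norm (1 + (norm u)\<^sup>2)" by simp
  qed
qed simp

lemma GN_int_lin[simp]: "integrable (GN::'a::euclidean_space measure) (\<lambda>u. v \<bullet> u)"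
proof (rule Bochner_Integration.integrable_bound[of _ "\<lambda>u. norm v * norm u"])
  show "integrable (GN::'a measure) (\<lambda>u. norm v * norm u)" by simp
  show "AE u in GN. norm (v \<bullet> u) \<le> norm (norm v * norm (u::'a))"
    by (rule AE_I2) (simp add: Cauchy_Schwarz_ineq2)
qed simp

lemma lborel_uminus: "distr lborel borel uminus = (lborel :: 'a::euclidean_space measure)"
proof -
  have "(lborel::'a measure) = density (distr lborel borel uminus) (\<lambda>x. 1)"
    using lborel_affine[of "-1" "0::'a"] by simp
  then show ?thesis by (metis density_1)
qed

lemma GN_symm:
  fixes g :: "'a::euclidean_space \<Rightarrow> real"
  assumes [measurable]: "g \<in> borel_measurable borel"
  shows "integral\<^sup>L GN (\<lambda>u. g (- u)) = integral\<^sup>L GN g"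
proof -
  have gdm: "gd (- u) = gd u" for u :: 'a by (simp add: gd_def)
  have "integral\<^sup>L GN g = (\<integral>u. gd u * g u \<partial>lborel)"
    unfolding GN_def by (rule integral_real_density) (auto simp: gd_nonneg)
  also have "\<dots> = (\<integral>u. gd u * g u \<partial>(distr lborel borel uminus))"
    by (simp add: lborel_uminus)
  also have "\<dots> = (\<integral>u. gd (- u) * g (- u) \<partial>lborel)"
    by (rule integral_distr) auto
  also have "\<dots> = (\<integral>u. gd u * g (- u) \<partial>lborel)" by (simp add: gdm)
  also have "\<dots> = integral\<^sup>L GN (\<lambda>u. g (- u))"
    unfolding GN_def by (rule integral_real_density[symmetric]) (auto simp: gd_nonneg)
  finally show ?thesis by simp
qed

lemma GN_lin_zero: "integral\<^sup>L (GN::'a::euclidean_space measure) (\<lambda>u. v \<bullet> u) = 0"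
proof -
  have "integral\<^sup>L (GN::'a measure) (\<lambda>u. v \<bullet> (- u)) = integral\<^sup>L GN (\<lambda>u. v \<bullet> u)"
    by (rule GN_symm) simp
  then have "- integral\<^sup>L (GN::'a measure) (\<lambda>u. v \<bullet> u) = integral\<^sup>L GN (\<lambda>u. v \<bullet> u)"
    by simp
  then show ?thesis by simp
qed

lemma gauss_smooth_GN:
  fixes f :: "'a::euclidean_space \<Rightarrow> real"
  assumes [measurable]: "f \<in> borel_measurable borel" and "\<sigma> \<noteq> 0"
  shows "gauss_smooth f \<sigma> x = integral\<^sup>L GN (\<lambda>u. f (x + \<sigma> *\<^sub>R u))"
proof -
  have "gauss_smooth f \<sigma> x = (\<integral>u. pi powr (- real DIM('a) / 2) * (f (x + \<sigma> *\<^sub>R u) * exp (- (norm u)\<^sup>2)) \<partial>lborel)"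
    using assms(2) by (simp add: gauss_smooth_def)
  also have "\<dots> = (\<integral>u. gd u * f (x + \<sigma> *\<^sub>R u) \<partial>lborel)"
    by (simp add: gd_def mult_ac)
  also have "\<dots> = integral\<^sup>L GN (\<lambda>u. f (x + \<sigma> *\<^sub>R u))"
    unfolding GN_def by (rule integral_real_density[symmetric]) (auto simp: gd_nonneg)
  finally show ?thesis .
qed

locale smoothf =
  fixes f :: "'a::euclidean_space \<Rightarrow> real" and D :: "'a \<Rightarrow> 'a" and L :: real
  assumes conv: "convex_on UNIV f"
    and der: "\<And>x. (f has_derivative (\<lambda>h. D x \<bullet> h)) (at x)"
    and lip: "\<And>x y. norm (D x - D y) \<le> L * norm (x - y)"
    and Lnn: "0 \<le> L"
begin

lemma f_cont: "continuous_on UNIV f"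
  using der has_derivative_continuous continuous_at_imp_continuous_on by blast

lemma f_meas[measurable]: "f \<in> borel_measurable borel"
  using f_cont borel_measurable_continuous_onI by blast

lemma D_cont: "continuous_on UNIV D"
proof -
  have "lipschitz_on L UNIV D"
    unfolding lipschitz_on_def using lip Lnn by (simp add: dist_norm)
  then show ?thesis using lipschitz_on_continuous_on by blast
qed

lemma D_meas[measurable]: "D \<in> borel_measurable borel"
  using D_cont borel_measurable_continuous_onI by blast

lemma tang: "f x + D x \<bullet> (y - x) \<le> f y"
  by (rule above_tangent[OF conv der])

lemma desc: "f y \<le> f x + D x \<bullet> (y - x) + L / 2 * (norm (y - x))\<^sup>2"
  by (rule descent[OF der lip])

lemma int_f: "integrable GN (\<lambda>u. f (x + \<sigma> *\<^sub>R u))"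
proof (rule Bochner_Integration.integrable_bound[of _ "\<lambda>u. \<bar>f x\<bar> + norm (D x) * \<bar>\<sigma>\<bar> * norm u + L / 2 * \<sigma>\<^sup>2 * (norm u)\<^sup>2"])
  show "integrable GN (\<lambda>u. \<bar>f x\<bar> + norm (D x) * \<bar>\<sigma>\<bar> * norm u + L / 2 * \<sigma>\<^sup>2 * (norm u)\<^sup>2)"
    by (intro Bochner_Integration.integrable_add integrable_mult_right) simp_all
  show "AE u in GN. norm (f (x + \<sigma> *\<^sub>R u)) \<le> norm (\<bar>f x\<bar> + norm (D x) * \<bar>\<sigma>\<bar> * norm u + L / 2 * \<sigma>\<^sup>2 * (norm u)\<^sup>2)"
  proof (rule AE_I2)
    fix u :: 'a
    define w where "w = \<sigma> *\<^sub>R u"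
    have nw: "norm w = \<bar>\<sigma>\<bar> * norm u" by (simp add: w_def)
    have cs: "\<bar>D x \<bullet> w\<bar> \<le> norm (D x) * norm w" by (rule Cauchy_Schwarz_ineq2)
    have l: "f x + D x \<bullet> w \<le> f (x + w)" using tang[of x "x + w"] by simp
    have r: "f (x + w) \<le> f x + D x \<bullet> w + L / 2 * (norm w)\<^sup>2" using desc[of "x + w" x] by simp
    have nn: "0 \<le> L / 2 * (norm w)\<^sup>2" using Lnn by simp
    have "\<bar>f (x + w)\<bar> \<le> \<bar>f x\<bar> + norm (D x) * norm w + L / 2 * (norm w)\<^sup>2"
      using l r cs nn by linarith
    also have "\<dots> = \<bar>f x\<bar> + norm (D x) * \<bar>\<sigma>\<bar> * norm u + L / 2 * \<sigma>\<^sup>2 * (norm u)\<^sup>2"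
      by (simp add: nw power_mult_distrib)
    finally show "norm (f (x + \<sigma> *\<^sub>R u)) \<le> norm (\<bar>f x\<bar> + norm (D x) * \<bar>\<sigma>\<bar> * norm u + L / 2 * \<sigma>\<^sup>2 * (norm u)\<^sup>2)"
      using Lnn by (simp add: w_def)
  qed
qed simp

lemma int_D: "integrable GN (\<lambda>u. D (x + \<sigma> *\<^sub>R u))"
proof (rule Bochner_Integration.integrable_bound[of _ "\<lambda>u. norm (D x) + L * \<bar>\<sigma>\<bar> * norm u"])
  show "integrable GN (\<lambda>u. norm (D x) + L * \<bar>\<sigma>\<bar> * norm u)"
    by (intro Bochner_Integration.integrable_add integrable_mult_right) simp_all
  show "AE u in GN. norm (D (x + \<sigma> *\<^sub>R u)) \<le> norm (norm (D x) + L * \<bar>\<sigma>\<bar> * norm u)"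
  proof (rule AE_I2)
    fix u :: 'a
    have "norm (D (x + \<sigma> *\<^sub>R u)) \<le> norm (D x) + norm (D (x + \<sigma> *\<^sub>R u) - D x)"
      by (metis add.commute diff_add_cancel norm_triangle_ineq)
    also have "\<dots> \<le> norm (D x) + L * \<bar>\<sigma>\<bar> * norm u"
      using lip[of "x + \<sigma> *\<^sub>R u" x] by simp
    finally show "norm (D (x + \<sigma> *\<^sub>R u)) \<le> norm (norm (D x) + L * \<bar>\<sigma>\<bar> * norm u)"
      using Lnn by simp
  qed
qed simp

lemma int_Du: "integrable GN (\<lambda>u. D (x + \<sigma> *\<^sub>R u) \<bullet> u)"
proof (rule Bochner_Integration.integrable_bound[of _ "\<lambda>u. norm (D x) * norm u + L * \<bar>\<sigma>\<bar> * (norm u)\<^sup>2"])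
  show "integrable GN (\<lambda>u. norm (D x) * norm u + L * \<bar>\<sigma>\<bar> * (norm u)\<^sup>2)"
    by (intro Bochner_Integration.integrable_add integrable_mult_right) simp_all
  show "AE u in GN. norm (D (x + \<sigma> *\<^sub>R u) \<bullet> u) \<le> norm (norm (D x) * norm u + L * \<bar>\<sigma>\<bar> * (norm u)\<^sup>2)"
  proof (rule AE_I2)
    fix u :: 'a
    have "norm (D (x + \<sigma> *\<^sub>R u)) \<le> norm (D x) + norm (D (x + \<sigma> *\<^sub>R u) - D x)"
      by (metis add.commute diff_add_cancel norm_triangle_ineq)
    also have "\<dots> \<le> norm (D x) + L * \<bar>\<sigma>\<bar> * norm u"
      using lip[of "x + \<sigma> *\<^sub>R u" x] by simp
    finally have a: "norm (D (x + \<sigma> *\<^sub>R u)) \<le> norm (D x) + L * \<bar>\<sigma>\<bar> * norm u" .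
    have "\<bar>D (x + \<sigma> *\<^sub>R u) \<bullet> u\<bar> \<le> norm (D (x + \<sigma> *\<^sub>R u)) * norm u" by (rule Cauchy_Schwarz_ineq2)
    also have "\<dots> \<le> (norm (D x) + L * \<bar>\<sigma>\<bar> * norm u) * norm u"
      using a by (intro mult_right_mono) auto
    also have "\<dots> = norm (D x) * norm u + L * \<bar>\<sigma>\<bar> * (norm u)\<^sup>2"
      by (simp add: algebra_simps power2_eq_square)
    finally show "norm (D (x + \<sigma> *\<^sub>R u) \<bullet> u) \<le> norm (norm (D x) * norm u + L * \<bar>\<sigma>\<bar> * (norm u)\<^sup>2)"
      using Lnn by simp
  qed
qed simp

definition S :: "real \<Rightarrow> 'a \<Rightarrow> real" where
  "S \<sigma> x = integral\<^sup>L GN (\<lambda>u. f (x + \<sigma> *\<^sub>R u))"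

definition Gv :: "real \<Rightarrow> 'a \<Rightarrow> 'a" where
  "Gv \<sigma> x = integral\<^sup>L GN (\<lambda>u. D (x + \<sigma> *\<^sub>R u))"

definition Aa :: "real \<Rightarrow> 'a \<Rightarrow> real" where
  "Aa \<sigma> x = integral\<^sup>L GN (\<lambda>u. D (x + \<sigma> *\<^sub>R u) \<bullet> u)"

lemma int_Dh: "integrable GN (\<lambda>u. D (x + \<sigma> *\<^sub>R u) \<bullet> h)"
  using int_D by (rule integrable_inner_left)

lemma S_plus_lin: "integral\<^sup>L GN (\<lambda>u. f (x + \<sigma> *\<^sub>R u) + D (x + \<sigma> *\<^sub>R u) \<bullet> h) = S \<sigma> x + Gv \<sigma> x \<bullet> h"
  unfolding S_def Gv_def
  by (subst Bochner_Integration.integral_add[OF int_f int_Dh]) (simp add: int_D)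

lemma S_lower: "S \<sigma> x + Gv \<sigma> x \<bullet> h \<le> S \<sigma> (x + h)"
proof -
  have "integral\<^sup>L GN (\<lambda>u. f (x + \<sigma> *\<^sub>R u) + D (x + \<sigma> *\<^sub>R u) \<bullet> h) \<le> integral\<^sup>L GN (\<lambda>u. f (x + h + \<sigma> *\<^sub>R u))"
  proof (rule integral_mono)
    show "integrable GN (\<lambda>u. f (x + \<sigma> *\<^sub>R u) + D (x + \<sigma> *\<^sub>R u) \<bullet> h)"
      using int_f int_Dh by (rule Bochner_Integration.integrable_add)
    show "integrable GN (\<lambda>u. f (x + h + \<sigma> *\<^sub>R u))" by (rule int_f)
    fix u :: 'a
    show "f (x + \<sigma> *\<^sub>R u) + D (x + \<sigma> *\<^sub>R u) \<bullet> h \<le> f (x + h + \<sigma> *\<^sub>R u)"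
      using tang[of "x + \<sigma> *\<^sub>R u" "x + h + \<sigma> *\<^sub>R u"] by (simp add: algebra_simps)
  qed
  then show ?thesis using S_plus_lin by (simp add: S_def)
qed

lemma S_upper: "S \<sigma> (x + h) \<le> S \<sigma> x + Gv \<sigma> x \<bullet> h + L / 2 * (norm h)\<^sup>2"
proof -
  have "integral\<^sup>L GN (\<lambda>u. f (x + h + \<sigma> *\<^sub>R u)) \<le> integral\<^sup>L GN (\<lambda>u. (f (x + \<sigma> *\<^sub>R u) + D (x + \<sigma> *\<^sub>R u) \<bullet> h) + L / 2 * (norm h)\<^sup>2)"
  proof (rule integral_mono)
    show "integrable GN (\<lambda>u. (f (x + \<sigma> *\<^sub>R u) + D (x + \<sigma> *\<^sub>R u) \<bullet> h) + L / 2 * (norm h)\<^sup>2)"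
      using int_f int_Dh by (intro Bochner_Integration.integrable_add) simp_all
    show "integrable GN (\<lambda>u. f (x + h + \<sigma> *\<^sub>R u))" by (rule int_f)
    fix u :: 'a
    show "f (x + h + \<sigma> *\<^sub>R u) \<le> (f (x + \<sigma> *\<^sub>R u) + D (x + \<sigma> *\<^sub>R u) \<bullet> h) + L / 2 * (norm h)\<^sup>2"
      using desc[of "x + h + \<sigma> *\<^sub>R u" "x + \<sigma> *\<^sub>R u"] by (simp add: algebra_simps)
  qed
  also have "\<dots> = S \<sigma> x + Gv \<sigma> x \<bullet> h + L / 2 * (norm h)\<^sup>2"
    using int_f int_Dh
    by (subst Bochner_Integration.integral_add) (auto intro!: Bochner_Integration.integrable_add simp: S_plus_lin GN_prob)
  finally show ?thesis by (simp add: S_def add.assoc)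
qed

end

context smoothf begin

lemma S_deriv: "(S \<sigma> has_derivative (\<lambda>h. Gv \<sigma> x \<bullet> h)) (at x)"
  unfolding has_derivative_at'
proof (intro conjI allI impI)
  show "bounded_linear (\<lambda>h. Gv \<sigma> x \<bullet> h)" by (rule bounded_linear_inner_right)
  fix e :: real assume e: "0 < e"
  define d where "d = e / (L / 2 + 1)"
  have d: "0 < d" using e Lnn by (simp add: d_def)
  show "\<exists>d>0. \<forall>x'. 0 < norm (x' - x) \<and> norm (x' - x) < d \<longrightarrow>
          norm (S \<sigma> x' - S \<sigma> x - Gv \<sigma> x \<bullet> (x' - x)) / norm (x' - x) < e"
  proof (intro exI[of _ d] conjI allI impI d)
    fix x' assume x': "0 < norm (x' - x) \<and> norm (x' - x) < d"
    define h where "h = x' - x"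
    have lo: "S \<sigma> x + Gv \<sigma> x \<bullet> h \<le> S \<sigma> (x + h)" by (rule S_lower)
    have up: "S \<sigma> (x + h) \<le> S \<sigma> x + Gv \<sigma> x \<bullet> h + L / 2 * (norm h)\<^sup>2" by (rule S_upper)
    have xh: "x + h = x'" by (simp add: h_def)
    have nh: "0 < norm h" "norm h < d" using x' by (auto simp: h_def)
    have "norm (S \<sigma> x' - S \<sigma> x - Gv \<sigma> x \<bullet> h) \<le> L / 2 * (norm h)\<^sup>2"
      using lo up xh by simp
    then have "norm (S \<sigma> x' - S \<sigma> x - Gv \<sigma> x \<bullet> h) / norm h \<le> L / 2 * norm h"
      using nh by (simp add: divide_le_eq power2_eq_square mult_ac)
    also have "\<dots> < (L / 2 + 1) * d"
    proof -
      have "L / 2 * norm h \<le> L / 2 * d" using nh Lnn by (intro mult_left_mono) auto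
      then show ?thesis using d by (simp add: distrib_right)
    qed
    also have "\<dots> = e" using Lnn by (simp add: d_def)
    finally show "norm (S \<sigma> x' - S \<sigma> x - Gv \<sigma> x \<bullet> (x' - x)) / norm (x' - x) < e"
      by (simp add: h_def)
  qed
qed

lemma grad_S: "grad (S \<sigma>) x = Gv \<sigma> x"
  by (rule grad_eqI[OF S_deriv])

lemma gs_eq: "\<sigma> \<noteq> 0 \<Longrightarrow> gauss_smooth f \<sigma> = S \<sigma>"
  by (rule ext) (simp add: gauss_smooth_GN S_def)

lemma lin_zero: "integral\<^sup>L GN (\<lambda>u. v \<bullet> (c *\<^sub>R u)) = 0"
proof -
  have "integral\<^sup>L GN (\<lambda>u. v \<bullet> (c *\<^sub>R u)) = integral\<^sup>L GN (\<lambda>u. (c *\<^sub>R v) \<bullet> u)" by simp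
  also have "\<dots> = 0" by (rule GN_lin_zero)
  finally show ?thesis .
qed

lemma lin_int: "integrable GN (\<lambda>u. v \<bullet> (c *\<^sub>R u))"
proof -
  have "(\<lambda>u. v \<bullet> (c *\<^sub>R u)) = (\<lambda>u. (c *\<^sub>R v) \<bullet> u)" by simp
  then show ?thesis using GN_int_lin by metis
qed

lemma f_le_S: "f x \<le> S \<sigma> x"
proof -
  have "integral\<^sup>L GN (\<lambda>u. f x + D x \<bullet> (\<sigma> *\<^sub>R u)) \<le> S \<sigma> x"
    unfolding S_def
  proof (rule integral_mono)
    show "integrable GN (\<lambda>u. f x + D x \<bullet> (\<sigma> *\<^sub>R u))"
      by (intro Bochner_Integration.integrable_add lin_int) simp
    show "integrable GN (\<lambda>u. f (x + \<sigma> *\<^sub>R u))" by (rule int_f)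
    fix u :: 'a
    show "f x + D x \<bullet> (\<sigma> *\<^sub>R u) \<le> f (x + \<sigma> *\<^sub>R u)"
      using tang[of x "x + \<sigma> *\<^sub>R u"] by simp
  qed
  moreover have "integral\<^sup>L GN (\<lambda>u. f x + D x \<bullet> (\<sigma> *\<^sub>R u)) = f x"
    by (subst Bochner_Integration.integral_add) (auto intro: lin_int simp del: inner_scaleR_right simp: lin_zero GN_prob)
  ultimately show ?thesis by simp
qed

end

context smoothf begin

lemma int_sq_c: "integrable (GN::'a measure) (\<lambda>u. c * (norm u)\<^sup>2)"
  by (intro integrable_mult_right) simp

lemma integral_sq_c: "integral\<^sup>L (GN::'a measure) (\<lambda>u. c * (norm u)\<^sup>2) = c * (real DIM('a) / 2)"
  by (simp add: GN_integral_sq[where 'a='a])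

lemma S_le_f: "S \<sigma> x \<le> f x + L * real DIM('a) * \<sigma>\<^sup>2 / 4"
proof -
  have "S \<sigma> x \<le> integral\<^sup>L GN (\<lambda>u. (f x + D x \<bullet> (\<sigma> *\<^sub>R u)) + L / 2 * \<sigma>\<^sup>2 * (norm u)\<^sup>2)"
    unfolding S_def
  proof (rule integral_mono)
    show "integrable GN (\<lambda>u. (f x + D x \<bullet> (\<sigma> *\<^sub>R u)) + L / 2 * \<sigma>\<^sup>2 * (norm u)\<^sup>2)"
      by (intro Bochner_Integration.integrable_add lin_int int_sq_c) simp
    show "integrable GN (\<lambda>u. f (x + \<sigma> *\<^sub>R u))" by (rule int_f)
    fix u :: 'a
    show "f (x + \<sigma> *\<^sub>R u) \<le> (f x + D x \<bullet> (\<sigma> *\<^sub>R u)) + L / 2 * \<sigma>\<^sup>2 * (norm u)\<^sup>2"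
      using desc[of "x + \<sigma> *\<^sub>R u" x] by (simp add: power_mult_distrib)
  qed
  also have "\<dots> = f x + L / 2 * \<sigma>\<^sup>2 * (real DIM('a) / 2)"
    apply (subst Bochner_Integration.integral_add)
      apply (intro Bochner_Integration.integrable_add lin_int int_sq_c; simp)
     apply (rule int_sq_c)
    apply (subst Bochner_Integration.integral_add)
      apply simp
     apply (rule lin_int)
    apply (simp only: lin_zero integral_sq_c)
    apply (simp add: GN_prob)
    done
  finally show ?thesis by (simp add: algebra_simps)
qed

lemma Aa_bounds:
  assumes s: "0 < \<sigma>"
  shows "0 \<le> Aa \<sigma> x" "Aa \<sigma> x \<le> L * \<sigma> * real DIM('a) / 2"
proof -
  define P where "P u = \<sigma> * (D (x + \<sigma> *\<^sub>R u) \<bullet> u) - D x \<bullet> (\<sigma> *\<^sub>R u)" for u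
  have intP: "integrable GN P"
    unfolding P_def by (intro Bochner_Integration.integrable_diff integrable_mult_right int_Du lin_int)
  have IP: "integral\<^sup>L GN P = \<sigma> * Aa \<sigma> x"
    unfolding P_def Aa_def
    by (subst Bochner_Integration.integral_diff) (auto intro!: integrable_mult_right int_Du lin_int simp del: inner_scaleR_right simp: lin_zero right_diff_distrib)
  have Peq: "P u = (D (x + \<sigma> *\<^sub>R u) - D x) \<bullet> (\<sigma> *\<^sub>R u)" for u
    by (simp add: P_def inner_diff_left right_diff_distrib)
  have P0: "0 \<le> P u" for u
    unfolding Peq using grad_mono[OF conv der, of "x + \<sigma> *\<^sub>R u" x] by simp
  have P1: "P u \<le> L * \<sigma>\<^sup>2 * (norm u)\<^sup>2" for u
  proof -
    have "P u \<le> norm (D (x + \<sigma> *\<^sub>R u) - D x) * norm (\<sigma> *\<^sub>R u)"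
      unfolding Peq by (rule norm_cauchy_schwarz)
    also have "\<dots> \<le> (L * norm (\<sigma> *\<^sub>R u)) * norm (\<sigma> *\<^sub>R u)"
      using lip[of "x + \<sigma> *\<^sub>R u" x] by (intro mult_right_mono) auto
    also have "\<dots> = L * \<sigma>\<^sup>2 * (norm u)\<^sup>2" using s by (simp add: power2_eq_square)
    finally show ?thesis .
  qed
  have "0 \<le> integral\<^sup>L GN P" using P0 by (intro integral_nonneg_AE) auto
  then show "0 \<le> Aa \<sigma> x" using IP s by (simp add: zero_le_mult_iff)
  have "integral\<^sup>L GN P \<le> integral\<^sup>L GN (\<lambda>u::'a. L * \<sigma>\<^sup>2 * (norm u)\<^sup>2)"
    apply (rule Bochner_Integration.integral_mono)
    using intP apply assumption
    using int_sq_c apply assumption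
    using P1 apply blast
    done
  also have "\<dots> = L * \<sigma>\<^sup>2 * (real DIM('a) / 2)" by (rule integral_sq_c)
  finally have "\<sigma> * Aa \<sigma> x \<le> \<sigma> * (L * \<sigma> * real DIM('a) / 2)"
    using IP by (simp add: power2_eq_square mult_ac)
  then show "Aa \<sigma> x \<le> L * \<sigma> * real DIM('a) / 2" using s by simp
qed

lemma int_Duc: "integrable GN (\<lambda>u. D (x + \<sigma> *\<^sub>R u) \<bullet> (c *\<^sub>R u))"
proof -
  have "(\<lambda>u. D (x + \<sigma> *\<^sub>R u) \<bullet> (c *\<^sub>R u)) = (\<lambda>u. c * (D (x + \<sigma> *\<^sub>R u) \<bullet> u))" by simp
  then show ?thesis using integrable_mult_right[OF int_Du] by metis
qed

lemma integral_Duc: "integral\<^sup>L GN (\<lambda>u. D (x + \<sigma> *\<^sub>R u) \<bullet> (c *\<^sub>R u)) = c * Aa \<sigma> x"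
proof -
  have "(\<lambda>u. D (x + \<sigma> *\<^sub>R u) \<bullet> (c *\<^sub>R u)) = (\<lambda>u. c * (D (x + \<sigma> *\<^sub>R u) \<bullet> u))" by simp
  then show ?thesis unfolding Aa_def by simp
qed

lemma lin_part: "integral\<^sup>L GN (\<lambda>u. f (x + \<sigma> *\<^sub>R u) + D (x + \<sigma> *\<^sub>R u) \<bullet> (c *\<^sub>R u)) = S \<sigma> x + c * Aa \<sigma> x"
  unfolding S_def
  by (subst Bochner_Integration.integral_add[OF int_f int_Duc]) (simp only: integral_Duc)

lemma int_lin_part: "integrable GN (\<lambda>u. f (x + \<sigma> *\<^sub>R u) + D (x + \<sigma> *\<^sub>R u) \<bullet> (c *\<^sub>R u))"
  by (intro Bochner_Integration.integrable_add int_f int_Duc)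

lemma S_step_lower: "S \<sigma> x + (\<sigma>' - \<sigma>) * Aa \<sigma> x \<le> S \<sigma>' x"
proof -
  have "integral\<^sup>L GN (\<lambda>u. f (x + \<sigma> *\<^sub>R u) + D (x + \<sigma> *\<^sub>R u) \<bullet> ((\<sigma>' - \<sigma>) *\<^sub>R u)) \<le> S \<sigma>' x"
    unfolding S_def
  proof (rule integral_mono)
    show "integrable GN (\<lambda>u. f (x + \<sigma>' *\<^sub>R u))" by (rule int_f)
    fix u :: 'a
    show "f (x + \<sigma> *\<^sub>R u) + D (x + \<sigma> *\<^sub>R u) \<bullet> ((\<sigma>' - \<sigma>) *\<^sub>R u) \<le> f (x + \<sigma>' *\<^sub>R u)"
      using tang[of "x + \<sigma> *\<^sub>R u" "x + \<sigma>' *\<^sub>R u"] by (simp add: algebra_simps)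
  qed (rule int_lin_part)
  then show ?thesis by (simp only: lin_part)
qed

lemma S_step_upper: "S \<sigma>' x \<le> S \<sigma> x + (\<sigma>' - \<sigma>) * Aa \<sigma> x + L / 2 * (\<sigma>' - \<sigma>)\<^sup>2 * (real DIM('a) / 2)"
proof -
  have "S \<sigma>' x \<le> integral\<^sup>L GN (\<lambda>u. (f (x + \<sigma> *\<^sub>R u) + D (x + \<sigma> *\<^sub>R u) \<bullet> ((\<sigma>' - \<sigma>) *\<^sub>R u)) + L / 2 * (\<sigma>' - \<sigma>)\<^sup>2 * (norm u)\<^sup>2)"
    unfolding S_def
  proof (rule integral_mono)
    show "integrable GN (\<lambda>u. f (x + \<sigma>' *\<^sub>R u))" by (rule int_f)
    show "integrable GN (\<lambda>u. (f (x + \<sigma> *\<^sub>R u) + D (x + \<sigma> *\<^sub>R u) \<bullet> ((\<sigma>' - \<sigma>) *\<^sub>R u)) + L / 2 * (\<sigma>' - \<sigma>)\<^sup>2 * (norm u)\<^sup>2)"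
      by (intro Bochner_Integration.integrable_add int_lin_part int_sq_c)
    fix u :: 'a
    have "f (x + \<sigma>' *\<^sub>R u) \<le> f (x + \<sigma> *\<^sub>R u) + D (x + \<sigma> *\<^sub>R u) \<bullet> ((x + \<sigma>' *\<^sub>R u) - (x + \<sigma> *\<^sub>R u)) + L / 2 * (norm ((x + \<sigma>' *\<^sub>R u) - (x + \<sigma> *\<^sub>R u)))\<^sup>2"
      by (rule desc)
    moreover have "(x + \<sigma>' *\<^sub>R u) - (x + \<sigma> *\<^sub>R u) = (\<sigma>' - \<sigma>) *\<^sub>R u" by (simp add: algebra_simps)
    ultimately show "f (x + \<sigma>' *\<^sub>R u) \<le> (f (x + \<sigma> *\<^sub>R u) + D (x + \<sigma> *\<^sub>R u) \<bullet> ((\<sigma>' - \<sigma>) *\<^sub>R u)) + L / 2 * (\<sigma>' - \<sigma>)\<^sup>2 * (norm u)\<^sup>2"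
      by (simp add: power_mult_distrib)
  qed
  also have "\<dots> = S \<sigma> x + (\<sigma>' - \<sigma>) * Aa \<sigma> x + L / 2 * (\<sigma>' - \<sigma>)\<^sup>2 * (real DIM('a) / 2)"
    by (subst Bochner_Integration.integral_add[OF int_lin_part int_sq_c]) (simp only: lin_part integral_sq_c)
  finally show ?thesis .
qed

lemma S_change:
  assumes "0 < \<sigma>" "0 < \<sigma>'"
  shows "S \<sigma>' x \<le> S \<sigma> x + L * real DIM('a) / 4 * max 0 (\<sigma>'\<^sup>2 - \<sigma>\<^sup>2)"
proof (cases "\<sigma> \<le> \<sigma>'")
  case True
  have "S \<sigma>' x \<le> S \<sigma> x + (\<sigma>' - \<sigma>) * Aa \<sigma> x + L / 2 * (\<sigma>' - \<sigma>)\<^sup>2 * (real DIM('a) / 2)"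
    by (rule S_step_upper)
  also have "(\<sigma>' - \<sigma>) * Aa \<sigma> x \<le> (\<sigma>' - \<sigma>) * (L * \<sigma> * real DIM('a) / 2)"
    using Aa_bounds(2)[OF assms(1), of x] True by (intro mult_left_mono) auto
  also have "S \<sigma> x + (\<sigma>' - \<sigma>) * (L * \<sigma> * real DIM('a) / 2) + L / 2 * (\<sigma>' - \<sigma>)\<^sup>2 * (real DIM('a) / 2)
      = S \<sigma> x + L * real DIM('a) / 4 * (\<sigma>'\<^sup>2 - \<sigma>\<^sup>2)"
    by (simp add: power2_eq_square field_simps)
  also have "\<dots> \<le> S \<sigma> x + L * real DIM('a) / 4 * max 0 (\<sigma>'\<^sup>2 - \<sigma>\<^sup>2)"
    using Lnn by (intro add_left_mono mult_left_mono) auto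
  finally show ?thesis by simp
next
  case False
  have "S \<sigma>' x + (\<sigma> - \<sigma>') * Aa \<sigma>' x \<le> S \<sigma> x" by (rule S_step_lower)
  moreover have "0 \<le> (\<sigma> - \<sigma>') * Aa \<sigma>' x"
    using Aa_bounds(1)[OF assms(2), of x] False by simp
  moreover have "0 \<le> L * real DIM('a) / 4 * max 0 (\<sigma>'\<^sup>2 - \<sigma>\<^sup>2)" using Lnn by simp
  ultimately show ?thesis by linarith
qed

end

theorem theorem3p1:
  fixes f :: "'a::euclidean_space \<Rightarrow> real"
    and L t :: real
    and \<sigma> :: "nat \<Rightarrow> real"
    and x :: "nat \<Rightarrow> 'a"
    and xstar :: 'a
    and k :: nat
  assumes conv: "convex_on UNIV f"
    and smooth: "L_smooth L f"
    and Lpos: "L > 0"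
    and minim: "\<forall>y. f xstar \<le> f y"
    and sigpos: "\<forall>n\<ge>1. \<sigma> n > 0"
    and tpos: "0 < t" and tle: "t \<le> 1 / L"
    and iter: "\<forall>j. x (Suc j) = x j - t *\<^sub>R grad (gauss_smooth f (\<sigma> (Suc j))) (x j)"
    and k1: "k \<ge> 1"
  shows "f (x k) - f xstar \<le>
           (norm (x 0 - xstar))\<^sup>2 / (2 * t * real k)
           + L * real DIM('a) / (4 * real k) *
             ((\<Sum>i=1..k. (\<sigma> i)\<^sup>2) +
              (\<Sum>i=2..k. real i * max 0 ((\<sigma> i)\<^sup>2 - (\<sigma> (i - 1))\<^sup>2)))"
proof -
  have diff: "\<And>z. f differentiable (at z)" and lipg: "\<And>z y. norm (grad f z - grad f y) \<le> L * norm (z - y)"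
    using smooth unfolding L_smooth_def by auto
  interpret sf: smoothf f "grad f" L
    by unfold_locales (use conv grad_works[OF diff] lipg Lpos in auto)
  define d where "d = real DIM('a)"
  define g where "g i z = sf.S (\<sigma> i) z" for i z
  define N where "N j = (norm (x j - xstar))\<^sup>2" for j
  define a where "a i = L * d * (\<sigma> i)\<^sup>2 / 4" for i
  define c where "c i = L * d / 4 * max 0 ((\<sigma> i)\<^sup>2 - (\<sigma> (i - 1))\<^sup>2)" for i
  have dnn: "0 \<le> d" by (simp add: d_def)
  have Lt: "L * t \<le> 1" using tle Lpos by (simp add: field_simps)
  have xs: "x (Suc j) = x j - t *\<^sub>R sf.Gv (\<sigma> (Suc j)) (x j)" for j
  proof -
    have "\<sigma> (Suc j) > 0" using sigpos by simp
    then have "\<sigma> (Suc j) \<noteq> 0" by simp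
    then show ?thesis using iter sf.gs_eq sf.grad_S by simp
  qed
  have stp: "g (Suc j) (x (Suc j)) \<le> g (Suc j) (x j) - t / 2 * (norm (sf.Gv (\<sigma> (Suc j)) (x j)))\<^sup>2
     \<and> g (Suc j) (x (Suc j)) \<le> g (Suc j) xstar + (N j - N (Suc j)) / (2 * t)" for j
  proof -
    define G where "G = sf.Gv (\<sigma> (Suc j)) (x j)"
    define s where "s = \<sigma> (Suc j)"
    define y where "y = x j"
    have y': "x (Suc j) = y + (- t *\<^sub>R G)" by (simp add: xs G_def y_def)
    have up: "sf.S s (y + (- t *\<^sub>R G)) \<le> sf.S s y + G \<bullet> (- t *\<^sub>R G) + L / 2 * (norm (- t *\<^sub>R G))\<^sup>2"
      unfolding G_def s_def y_def by (rule sf.S_upper)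
    have "L / 2 * (norm (- t *\<^sub>R G))\<^sup>2 = (L * t) * t / 2 * (norm G)\<^sup>2"
      by (simp add: power2_eq_square)
    also have "\<dots> \<le> 1 * t / 2 * (norm G)\<^sup>2"
      using Lt tpos by (intro mult_right_mono divide_right_mono) auto
    finally have q: "L / 2 * (norm (- t *\<^sub>R G))\<^sup>2 \<le> t / 2 * (norm G)\<^sup>2" by simp
    have GG: "G \<bullet> (- t *\<^sub>R G) = - t * (norm G)\<^sup>2" by (simp add: power2_norm_eq_inner)
    have A: "sf.S s (x (Suc j)) \<le> sf.S s y - t / 2 * (norm G)\<^sup>2"
    proof -
      have "sf.S s (y + (- t *\<^sub>R G)) \<le> sf.S s y - t / 2 * (norm G)\<^sup>2"
        using up q GG by linarith
      then show ?thesis using y' by simp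
    qed
    have lo: "sf.S s y + G \<bullet> (xstar - y) \<le> sf.S s (y + (xstar - y))"
      unfolding G_def s_def y_def by (rule sf.S_lower)
    have nsq: "(norm (v - t *\<^sub>R G))\<^sup>2 = (norm v)\<^sup>2 - 2*t*(G \<bullet> v) + t\<^sup>2*(norm G)\<^sup>2" for v
      unfolding power2_norm_eq_inner by (simp add: inner_diff_left inner_diff_right inner_commute[of v G] power2_eq_square algebra_simps)
    have Nid: "N (Suc j) = N j - 2 * t * (G \<bullet> (y - xstar)) + t\<^sup>2 * (norm G)\<^sup>2"
    proof -
      have e: "x (Suc j) - xstar = (y - xstar) - t *\<^sub>R G" using y' by (simp add: algebra_simps)
      have "N (Suc j) = (norm ((y - xstar) - t *\<^sub>R G))\<^sup>2" by (simp only: N_def e)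
      then show ?thesis using nsq[of "y - xstar"] by (simp add: N_def y_def)
    qed
    have "(N j - N (Suc j)) / (2 * t) = G \<bullet> (y - xstar) - t / 2 * (norm G)\<^sup>2"
      using tpos unfolding Nid by (simp add: field_simps power2_eq_square)
    moreover have "G \<bullet> (xstar - y) = - (G \<bullet> (y - xstar))" by (simp add: inner_diff_right)
    ultimately have B: "sf.S s (x (Suc j)) \<le> sf.S s xstar + (N j - N (Suc j)) / (2 * t)"
      using A lo by simp
    show ?thesis using A B by (simp add: g_def s_def y_def G_def)
  qed
  have chg: "g (Suc i) z \<le> g i z + c (Suc i)" if "1 \<le> i" for i z
    unfolding g_def c_def d_def using sf.S_change[of "\<sigma> i" "\<sigma> (Suc i)" z] sigpos that by simp
  have fle: "f z \<le> g i z" for i z unfolding g_def by (rule sf.f_le_S)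
  have gx: "g i xstar \<le> f xstar + a i" for i
    unfolding g_def a_def d_def using sf.S_le_f[of "\<sigma> i" xstar] by (simp add: mult_ac)
  have cnn: "0 \<le> c i" for i using Lpos dnn by (simp add: c_def)
  have I1: "(\<Sum>i=1..n. g i (x i)) \<le> (\<Sum>i=1..n. g i xstar) + (N 0 - N n) / (2 * t)" for n
  proof (induction n)
    case 0 then show ?case by simp
  next
    case (Suc n)
    have "(\<Sum>i=1..Suc n. g i (x i)) = (\<Sum>i=1..n. g i (x i)) + g (Suc n) (x (Suc n))" by simp
    also have "\<dots> \<le> ((\<Sum>i=1..n. g i xstar) + (N 0 - N n) / (2 * t)) + (g (Suc n) xstar + (N n - N (Suc n)) / (2 * t))"
      using Suc stp[of n] by linarith
    also have "\<dots> = (\<Sum>i=1..Suc n. g i xstar) + (N 0 - N (Suc n)) / (2 * t)"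
      by (simp add: diff_divide_distrib)
    finally show ?case .
  qed
  have I2: "real n * g n (x n) \<le> (\<Sum>i=1..n. g i (x i)) + (\<Sum>i=2..n. (real i - 1) * c i)" if "1 \<le> n" for n
    using that
  proof (induction n rule: dec_induct)
    case base then show ?case by simp
  next
    case (step n)
    have e1: "g (Suc n) (x (Suc n)) \<le> g n (x n) + c (Suc n)"
    proof -
      have "0 \<le> t / 2 * (norm (sf.Gv (\<sigma> (Suc n)) (x n)))\<^sup>2" using tpos by simp
      then show ?thesis using chg[OF step(1), of "x n"] stp[of n, THEN conjunct1] by linarith
    qed
    have "real (Suc n) * g (Suc n) (x (Suc n)) = g (Suc n) (x (Suc n)) + real n * g (Suc n) (x (Suc n))"
      by (simp add: algebra_simps)
    also have "\<dots> \<le> g (Suc n) (x (Suc n)) + real n * (g n (x n) + c (Suc n))"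
      using e1 by (intro add_left_mono mult_left_mono) auto
    also have "\<dots> = g (Suc n) (x (Suc n)) + real n * g n (x n) + (real (Suc n) - 1) * c (Suc n)"
      by (simp add: algebra_simps)
    also have "\<dots> \<le> g (Suc n) (x (Suc n)) + ((\<Sum>i=1..n. g i (x i)) + (\<Sum>i=2..n. (real i - 1) * c i)) + (real (Suc n) - 1) * c (Suc n)"
      using step(3) by simp
    also have "\<dots> = (\<Sum>i=1..Suc n. g i (x i)) + (\<Sum>i=2..Suc n. (real i - 1) * c i)"
      using step(1) by (simp add: sum.cl_ivl_Suc)
    finally show ?case .
  qed
  have kpos: "0 < real k" using k1 by simp
  have "real k * f (x k) \<le> real k * g k (x k)" using fle kpos by simp
  also have "\<dots> \<le> (\<Sum>i=1..k. g i (x i)) + (\<Sum>i=2..k. (real i - 1) * c i)" by (rule I2[OF k1])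
  also have "\<dots> \<le> (\<Sum>i=1..k. (f xstar + a i)) + (N 0 - N k) / (2 * t) + (\<Sum>i=2..k. real i * c i)"
  proof -
    have "(\<Sum>i=1..k. g i xstar) \<le> (\<Sum>i=1..k. (f xstar + a i))" by (intro sum_mono gx)
    moreover have "(\<Sum>i=2..k. (real i - 1) * c i) \<le> (\<Sum>i=2..k. real i * c i)"
      using cnn by (intro sum_mono) (simp add: algebra_simps)
    ultimately show ?thesis using I1[of k] by linarith
  qed
  also have "\<dots> \<le> real k * f xstar + (\<Sum>i=1..k. a i) + N 0 / (2 * t) + (\<Sum>i=2..k. real i * c i)"
  proof -
    have "0 \<le> N k / (2 * t)" using tpos by (simp add: N_def)
    then show ?thesis by (simp add: sum.distrib diff_divide_distrib)
  qed
  finally have main: "real k * f (x k) \<le> real k * f xstar + (\<Sum>i=1..k. a i) + N 0 / (2 * t) + (\<Sum>i=2..k. real i * c i)" .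
  have sa: "(\<Sum>i=1..k. a i) = L * d / 4 * (\<Sum>i=1..k. (\<sigma> i)\<^sup>2)"
    by (simp add: a_def sum_distrib_left sum_divide_distrib mult_ac)
  have sc: "(\<Sum>i=2..k. real i * c i) = L * d / 4 * (\<Sum>i=2..k. real i * max 0 ((\<sigma> i)\<^sup>2 - (\<sigma> (i - 1))\<^sup>2))"
    by (simp add: c_def sum_distrib_left mult_ac)
  have "f (x k) - f xstar \<le> (N 0 / (2 * t) + L * d / 4 * ((\<Sum>i=1..k. (\<sigma> i)\<^sup>2) + (\<Sum>i=2..k. real i * max 0 ((\<sigma> i)\<^sup>2 - (\<sigma> (i - 1))\<^sup>2)))) / real k"
    using main kpos unfolding sa sc by (simp add: field_simps)
  also have "\<dots> = N 0 / (2 * t * real k) + L * d / (4 * real k) * ((\<Sum>i=1..k. (\<sigma> i)\<^sup>2) + (\<Sum>i=2..k. real i * max 0 ((\<sigma> i)\<^sup>2 - (\<sigma> (i - 1))\<^sup>2)))"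
    using kpos tpos by (simp add: field_simps)
  finally show ?thesis by (simp add: N_def d_def)
qed

end
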